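(* Suppose $K$ satisfies (K1) and (K2). There is a constant $C\ge1$, depending only on $d$, $s$, $\lambda$ and $\Lambda$, such that for every $\varepsilon\in(0,1)$ and every ground state $u$ of $H^{(\varepsilon)}$, the set $E(u,\varepsilon):=\{x\in\mathbb R^d:\bar u_\varepsilon(x)=1\}$ satisfies $$\mathrm{Per}_K(E(u,\varepsilon);\mathring Q_R)\le C\,R^{d-s}\quad\text{for every } R\ge1.$$
   Context: $d\ge2$; $|\cdot|$ is the $\ell^1$ norm, $|x|_\infty=\max_n|x_n|$; $Q_r(x):=\{y\in\mathbb R^d:|y-x|_\infty\le r\}$, $Q_r=Q_r(0)$, $\mathring Q$ the interior. $K:\mathbb R^d\times\mathbb R^d\to[0,+\infty]$ measurable with (K1) $K(x,y)=K(y,x)$ a.e.; (K2) $\lambda|x-y|^{-d-s}\le K(x,y)\le\Lambda|x-y|^{-d-s}$ a.e., for some $s\in(0,1)$, $\Lambda\ge\lambda>0$. $L_K(A,B):=\int_A\int_BK$; $\mathrm{Per}_K(E;\Omega):=L_K(E\cap\Omega,\Omega\setminus E)+L_K(E\cap\Omega,\mathbb R^d\setminus(E\cup\Omega))+L_K(E\setminus\Omega,\Omega\setminus E)$. For $\varepsilon>0$: $J^{(\varepsilon)}_{ij}:=\varepsilon^{-d+s}\int_{Q_{\varepsilon/2}(\varepsilon i)}\int_{Q_{\varepsilon/2}(\varepsilon j)}K(x,y)\,dx\,dy$ if $i\ne j$, $J^{(\varepsilon)}_{ii}:=0$. Configurations are maps $u:\mathbb Z^d\to\{-1,1\}$; for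 finite $\Gamma$, $H^{(\varepsilon)}_\Gamma(u):=\sum_{(i,j)\in\mathbb Z^{2d}\setminus(\mathbb Z^d\setminus\Gamma)^2}J^{(\varepsilon)}_{ij}(1-u_iu_j)$; $u$ is a ground state of $H^{(\varepsilon)}$ if $H^{(\varepsilon)}_\Gamma(u)\le H^{(\varepsilon)}_\Gamma(v)$ for every finite $\Gamma$ and every $v$ agreeing with $u$ outside $\Gamma$. The extension $\bar u_\varepsilon$ is defined a.e. by $\bar u_\varepsilon(x):=u_i$ where $i$ is the unique site with $x\in\mathring Q_{\varepsilon/2}(\varepsilon i)$. *)

theory Defs
  imports "HOL-Analysis.Analysis"
begin

text \<open>Points of R^d are real^'n, lattice sites of Z^d are int^'n, d = CARD('n).\<close>

definition l1norm :: "real^'n \<Rightarrow> real" where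
  "l1norm x = (\<Sum>k\<in>UNIV. \<bar>x$k\<bar>)"

definition cube :: "real \<Rightarrow> real^'n \<Rightarrow> (real^'n) set" where
  "cube r x = {y. \<forall>k. \<bar>y$k - x$k\<bar> \<le> r}"

definition ocube :: "real \<Rightarrow> real^'n \<Rightarrow> (real^'n) set" where
  "ocube r x = {y. \<forall>k. \<bar>y$k - x$k\<bar> < r}"

definition site :: "real \<Rightarrow> int^'n \<Rightarrow> real^'n" where
  "site \<epsilon> i = (\<chi> k. \<epsilon> * of_int (i$k))"

definition LK :: "(real^'n \<Rightarrow> real^'n \<Rightarrow> ennreal) \<Rightarrow> (real^'n) set \<Rightarrow> (real^'n) set \<Rightarrow> ennreal" where
  "LK K A B = (\<integral>\<^sup>+ p. K (fst p) (snd p) * indicator (A \<times> B) p \<partial>lebesgue)"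

definition PerK :: "(real^'n \<Rightarrow> real^'n \<Rightarrow> ennreal) \<Rightarrow> (real^'n) set \<Rightarrow> (real^'n) set \<Rightarrow> ennreal" where
  "PerK K E \<Omega> = LK K (E \<inter> \<Omega>) (\<Omega> - E) + LK K (E \<inter> \<Omega>) (UNIV - (E \<union> \<Omega>)) + LK K (E - \<Omega>) (\<Omega> - E)"

definition K1 :: "(real^'n \<Rightarrow> real^'n \<Rightarrow> ennreal) \<Rightarrow> bool" where
  "K1 K \<longleftrightarrow> (AE p in lebesgue. K (fst p) (snd p) = K (snd p) (fst p))"

definition K2 :: "real \<Rightarrow> real \<Rightarrow> real \<Rightarrow> (real^'n \<Rightarrow> real^'n \<Rightarrow> ennreal) \<Rightarrow> bool" where
  "K2 s lam Lam K \<longleftrightarrow> (AE p in lebesgue.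
      ennreal (lam * l1norm (fst p - snd p) powr (- real CARD('n) - s)) \<le> K (fst p) (snd p) \<and>
      K (fst p) (snd p) \<le> ennreal (Lam * l1norm (fst p - snd p) powr (- real CARD('n) - s)))"

definition Jeps :: "(real^'n \<Rightarrow> real^'n \<Rightarrow> ennreal) \<Rightarrow> real \<Rightarrow> real \<Rightarrow> int^'n \<Rightarrow> int^'n \<Rightarrow> ennreal" where
  "Jeps K s \<epsilon> i j = (if i = j then 0 else
     ennreal (\<epsilon> powr (- real CARD('n) + s)) * LK K (cube (\<epsilon>/2) (site \<epsilon> i)) (cube (\<epsilon>/2) (site \<epsilon> j)))"

definition Hloc :: "(real^'n \<Rightarrow> real^'n \<Rightarrow> ennreal) \<Rightarrow> real \<Rightarrow> real \<Rightarrow> (int^'n) set \<Rightarrow> (int^'n \<Rightarrow> real) \<Rightarrow> ennreal" where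
  "Hloc K s \<epsilon> \<Gamma> u = (\<Sum>\<^sub>\<infinity> p \<in> {p. fst p \<in> \<Gamma> \<or> snd p \<in> \<Gamma>}.
       Jeps K s \<epsilon> (fst p) (snd p) * ennreal (1 - u (fst p) * u (snd p)))"

definition spin_config :: "(int^'n \<Rightarrow> real) \<Rightarrow> bool" where
  "spin_config u \<longleftrightarrow> (\<forall>i. u i = 1 \<or> u i = -1)"

definition ground_state :: "(real^'n \<Rightarrow> real^'n \<Rightarrow> ennreal) \<Rightarrow> real \<Rightarrow> real \<Rightarrow> (int^'n \<Rightarrow> real) \<Rightarrow> bool" where
  "ground_state K s \<epsilon> u \<longleftrightarrow> spin_config u \<and>
     (\<forall>\<Gamma> v. finite \<Gamma> \<longrightarrow> spin_config v \<longrightarrow> (\<forall>i. i \<notin> \<Gamma> \<longrightarrow> v i = u i) \<longrightarrow>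
        Hloc K s \<epsilon> \<Gamma> u \<le> Hloc K s \<epsilon> \<Gamma> v)"

text \<open>E(u,eps) = {x. ubar_eps x = 1}, ubar_eps defined on the union of open cells.\<close>
definition Eset :: "(int^'n \<Rightarrow> real) \<Rightarrow> real \<Rightarrow> (real^'n) set" where
  "Eset u \<epsilon> = (\<Union>i\<in>{i. u i = 1}. ocube (\<epsilon>/2) (site \<epsilon> i))"

end

theory Submission
  imports Defs
begin


lemma cube_cbox: "cube r x = cbox (x - (\<chi> k. r)) (x + (\<chi> k. r))"
  by (auto simp: cube_def mem_box_cart abs_le_iff algebra_simps)

lemma ocube_box: "ocube r x = box (x - (\<chi> k. r)) (x + (\<chi> k. r))"
  by (auto simp: ocube_def mem_box_cart abs_less_iff algebra_simps)

lemma prod_basis_const: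
  fixes v :: "real^'n"
  assumes "\<And>k. v$k = c"
  shows "(\<Prod>b\<in>Basis. v \<bullet> b) = c ^ CARD('n)"
proof -
  have "(\<Prod>b\<in>Basis. v \<bullet> b) = (\<Prod>b\<in>(Basis::(real^'n) set). c)"
    by (rule prod.cong) (auto simp: Basis_vec_def cart_eq_inner_axis[symmetric] inner_axis assms)
  also have "\<dots> = c ^ CARD('n)" by simp
  finally show ?thesis .
qed

lemma emeasure_cube:
  assumes "r \<ge> 0"
  shows "emeasure lborel (cube r (x::real^'n)) = ennreal ((2*r) ^ CARD('n))"
  unfolding cube_cbox emeasure_lborel_cbox_eq using assms
  by (subst prod_basis_const[where c="2*r"]) (auto simp: Basis_vec_def cart_eq_inner_axis[symmetric] inner_axis)

lemma emeasure_ocube: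
  assumes "r \<ge> 0"
  shows "emeasure lborel (ocube r (x::real^'n)) = ennreal ((2*r) ^ CARD('n))"
  unfolding ocube_box emeasure_lborel_box_eq using assms
  by (subst prod_basis_const[where c="2*r"]) (auto simp: Basis_vec_def cart_eq_inner_axis[symmetric] inner_axis)

lemma closed_cube: "closed (cube r x)" unfolding cube_cbox by (simp add: closed_cbox)
lemma open_ocube: "open (ocube r x)" unfolding ocube_box by (simp add: open_box)

lemma hyperplane_null:
  fixes b :: "'a::euclidean_space"
  assumes "b \<noteq> 0"
  shows "{x. x \<bullet> b = c} \<in> null_sets lebesgue"
proof -
  have "{x. x \<bullet> b = c} = {x. b \<bullet> x = c}" by (auto simp: inner_commute)
  then show ?thesis using negligible_hyperplane[of b c] assms
    by (simp add: negligible_iff_null_sets)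
qed

definition NB :: "real \<Rightarrow> (real^'n) set" where
  "NB e = {y. \<exists>k. \<exists>m::int. y$k = e * (of_int m + 1/2)}"

lemma NB_null: "NB e \<in> null_sets (lebesgue :: (real^'n) measure)"
proof -
  have eq: "NB e = (\<Union>k\<in>UNIV. \<Union>m\<in>(UNIV::int set). {y::real^'n. y \<bullet> axis k 1 = e * (of_int m + 1/2)})"
    by (auto simp: NB_def inner_axis)
  show ?thesis unfolding eq
    by (intro null_sets_UN' hyperplane_null) (auto simp: axis_eq_0_iff zero_prod_def)
qed

lemma NB_snd_null: "{p::((real^'n) \<times> (real^'n)). snd p \<in> NB e} \<in> null_sets lebesgue"
proof -
  have eq: "{p::((real^'n) \<times> (real^'n)). snd p \<in> NB e} = (\<Union>k\<in>UNIV. \<Union>m\<in>(UNIV::int set).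
       {p. p \<bullet> (0, axis k 1) = e * (of_int m + 1/2)})"
    unfolding NB_def by (auto simp: inner_axis inner_Pair) blast+
  show ?thesis unfolding eq
    by (intro null_sets_UN' hyperplane_null) (auto simp: axis_eq_0_iff zero_prod_def)
qed

lemma NB_fst_null: "{p::((real^'n) \<times> (real^'n)). fst p \<in> NB e} \<in> null_sets lebesgue"
proof -
  have eq: "{p::((real^'n) \<times> (real^'n)). fst p \<in> NB e} = (\<Union>k\<in>UNIV. \<Union>m\<in>(UNIV::int set).
       {p. p \<bullet> (axis k 1, 0) = e * (of_int m + 1/2)})"
    unfolding NB_def by (auto simp: inner_axis inner_Pair) blast+
  show ?thesis unfolding eq
    by (intro null_sets_UN' hyperplane_null) (auto simp: axis_eq_0_iff zero_prod_def)
qed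

lemma cell_exists:
  fixes y :: "real^'n"
  assumes "e > 0" "y \<notin> NB e"
  shows "\<exists>j. y \<in> ocube (e/2) (site e j)"
proof -
  define j :: "int^'n" where "j = (\<chi> k. \<lfloor>y$k / e + 1/2\<rfloor>)"
  have "\<bar>y$k - e * of_int (j$k)\<bar> < e/2" for k
  proof -
    have jk: "j$k = \<lfloor>y$k / e + 1/2\<rfloor>" unfolding j_def by simp
    have a: "of_int (j$k) \<le> y$k/e + 1/2" "y$k/e + 1/2 < of_int (j$k) + 1"
      unfolding jk by linarith+
    have b: "y$k \<noteq> e * (of_int (j$k - 1) + 1/2)"
      using assms(2) unfolding NB_def by blast
    have c: "e * (of_int (j$k) - 1/2) \<le> y$k" "y$k < e * (of_int (j$k) + 1/2)"
      using a assms(1) by (auto simp: field_simps)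
    have "e * (of_int (j$k) - 1/2) \<noteq> y$k" using b by (simp add: algebra_simps)
    then have "e * (of_int (j$k) - 1/2) < y$k" using c(1) by (auto simp: order_less_le)
    then have "e * of_int (j$k) - e/2 < y$k" "y$k < e * of_int (j$k)+e/2" using c(2) by (simp_all add: algebra_simps)
    then show ?thesis unfolding abs_less_iff by linarith
  qed
  then show ?thesis by (auto simp: ocube_def site_def)
qed

lemma ocube_sub_cube: "ocube r x \<subseteq> cube r x"
  by (auto simp: ocube_def cube_def less_imp_le)

lemma cube_notNB_ocube:
  assumes "e > 0" "x \<in> cube (e/2) (site e i)" "x \<notin> NB e"
  shows "x \<in> ocube (e/2) (site e i)"
proof -
  have "\<bar>x$k - e * of_int (i$k)\<bar> < e/2" for k
  proof -
    have "\<bar>x$k - e * of_int (i$k)\<bar> \<le> e/2" using assms(2) by (auto simp: cube_def site_def)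
    moreover have "x$k \<noteq> e * (of_int (i$k) + 1/2)" "x$k \<noteq> e * (of_int (i$k - 1) + 1/2)"
      using assms(3) unfolding NB_def by blast+
    then have "x$k - e * of_int (i$k) \<noteq> e/2" "x$k - e * of_int (i$k) \<noteq> -(e/2)"
      by (auto simp: algebra_simps)
    ultimately show ?thesis by arith
  qed
  then show ?thesis by (auto simp: ocube_def site_def)
qed

lemma ocube_cube_unique:
  assumes "e > 0" "x \<in> ocube (e/2) (site e i)" "x \<in> cube (e/2) (site e i')"
  shows "i = i'"
proof (rule vec_eq_iff[THEN iffD2], rule allI)
  fix k
  have 1: "\<bar>x$k - e * of_int (i$k)\<bar> < e/2" using assms(2) by (auto simp: ocube_def site_def)
  have 2: "\<bar>x$k - e * of_int (i'$k)\<bar> \<le> e/2" using assms(3) by (auto simp: cube_def site_def)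
  have "e * (of_int (i$k) - of_int (i'$k)) < e * 1" "e * (of_int (i'$k) - of_int (i$k)) < e * 1"
    using 1 2 assms(1) by (simp_all add: algebra_simps; arith)+
  then have "of_int (i$k) - of_int (i'$k) < (1::real)" "of_int (i'$k) - of_int (i$k) < (1::real)"
    using assms(1) mult_less_cancel_left_pos by blast+
  then have "\<bar>of_int (i$k - i'$k)\<bar> < (1::real)" by simp
  then have "\<bar>i$k - i'$k\<bar> < 1" by linarith
  then show "i$k = i'$k" by simp
qed



lemma dyadic_up:
  fixes d r :: real
  assumes "0 < d" "d < r"
  shows "\<exists>k::nat. 2^k * d < r \<and> r \<le> 2^(k+1) * d"
proof -
  obtain N :: nat where N: "r / d < 2^N" using real_arch_pow[of 2 "r/d"] by auto
  then have "r \<le> 2^(N+1) * d" using assms by (simp add: field_simps)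
  then have ex: "\<exists>k. r \<le> 2^(k+1) * d" by blast
  define k where "k = (LEAST k. r \<le> 2^(k+1) * d)"
  have k1: "r \<le> 2^(k+1) * d" unfolding k_def by (rule LeastI_ex[OF ex])
  have "2^k * d < r"
  proof (cases k)
    case 0 then show ?thesis using assms by simp
  next
    case (Suc k')
    then have "\<not> r \<le> 2^(k'+1) * d" using not_less_Least[of k' "\<lambda>k. r \<le> 2^(k+1) * d"] k_def by auto
    then show ?thesis using Suc by simp
  qed
  then show ?thesis using k1 by blast
qed

lemma dyadic_down:
  fixes d a :: real
  assumes "0 < d" "d \<le> a"
  shows "\<exists>k::nat. a / 2^(k+1) < d \<and> d \<le> a / 2^k"
proof -
  obtain N :: nat where N: "a / d < 2^N" using real_arch_pow[of 2 "a/d"] by auto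
  then have "a < 2^(N+1) * d" using assms by (simp add: field_simps)
  then have ex: "\<exists>k. a < 2^(k+1) * d" by blast
  define k where "k = (LEAST k. a < 2^(k+1) * d)"
  have k1: "a < 2^(k+1) * d" unfolding k_def by (rule LeastI_ex[OF ex])
  have "d \<le> a / 2^k"
  proof (cases k)
    case 0 then show ?thesis using assms by simp
  next
    case (Suc k')
    then have "\<not> a < 2^(k'+1) * d" using not_less_Least[of k' "\<lambda>k. a < 2^(k+1) * d"] k_def by auto
    then show ?thesis using Suc by (simp add: field_simps)
  qed
  moreover have "a / 2^(k+1) < d" using k1 by (simp add: field_simps)
  ultimately show ?thesis by blast
qed

lemma l1norm_ge: "\<bar>x$k\<bar> \<le> l1norm x"
  unfolding l1norm_def by (rule member_le_sum) auto

lemma l1norm_nonneg: "0 \<le> l1norm x"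
  unfolding l1norm_def by (rule sum_nonneg) auto

lemma l1norm_commute: "l1norm (x - y) = l1norm (y - x)"
  unfolding l1norm_def by (simp add: abs_minus_commute)

lemma inner_term:
  fixes dl s :: real
  assumes "0 < dl"
  shows "(2^n * dl) powr (- real CARD('n) - s) * (2 * (2^(n+1) * dl)) ^ CARD('n)
        = 4^CARD('n) * dl powr (-s) * (2 powr (-s))^n"
proof -
  obtain t where tt: "2^n * dl = t" by blast
  have t: "t > 0" using assms tt by auto
  have "(2 * (2^(n+1) * dl)) = 4 * t" using tt by simp
  then have e1: "(2 * (2^(n+1) * dl)) ^ CARD('n) = 4^CARD('n) * t powr (real CARD('n))"
    using t by (simp add: power_mult_distrib powr_realpow)
  have e3: "t powr (-s) = dl powr (-s) * (2 powr (-s))^n"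
    using assms unfolding tt[symmetric] by (simp add: powr_mult powr_realpow[symmetric] powr_powr powr_power mult.commute)
  have "(2^n * dl) powr (- real CARD('n) - s) * (2 * (2^(n+1) * dl)) ^ CARD('n)
      = t powr (- real CARD('n) - s) * (4^CARD('n) * t powr (real CARD('n)))" using e1 tt by simp
  also have "\<dots> = 4^CARD('n) * (t powr (real CARD('n)) * t powr (- real CARD('n) - s))" by (simp add: ac_simps)
  also have "\<dots> = 4^CARD('n) * t powr (-s)" by (simp add: powr_add[symmetric])
  also have "\<dots> = 4^CARD('n) * dl powr (-s) * (2 powr (-s))^n" using e3 by simp
  finally show ?thesis .
qed

lemma inner_bound:
  fixes x :: "real^'n" and dl s :: real
  assumes "0 < dl" "0 < s"
  shows "(\<integral>\<^sup>+y. indicator (- cube dl x) y * ennreal (l1norm (x - y) powr (- real CARD('n) - s)) \<partial>lborel)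
         \<le> ennreal (4^CARD('n) / (1 - 2 powr (-s)) * dl powr (-s))"
proof -
  let ?d = "real CARD('n)"
  define g where "g n y = indicator (cube (2^(n+1) * dl) x) y * ennreal ((2^n * dl) powr (- ?d - s))" for n y
  have pw: "indicator (- cube dl x) y * ennreal (l1norm (x - y) powr (- ?d - s)) \<le> (\<Sum>n. g n y)" for y
  proof (cases "y \<in> cube dl x")
    case True then show ?thesis by simp
  next
    case False
    then obtain k0 where k0: "\<bar>y$k0 - x$k0\<bar> > dl" by (auto simp: cube_def not_le)
    define r where "r = l1norm (x - y)"
    have "\<bar>y$k0 - x$k0\<bar> \<le> r" unfolding r_def using l1norm_ge[of "x - y" k0] by (simp add: abs_minus_commute)
    then have rd: "dl < r" using k0 by simp
    obtain k where k: "2^k * dl < r" "r \<le> 2^(k+1) * dl" using dyadic_up[OF assms(1) rd] by blast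
    have "y \<in> cube (2^(k+1) * dl) x"
    proof -
      have "\<bar>y$j - x$j\<bar> \<le> r" for j unfolding r_def using l1norm_ge[of "x - y" j] by (simp add: abs_minus_commute)
      then show ?thesis using k(2) by (auto simp: cube_def intro: order_trans)
    qed
    moreover have "r powr (- ?d - s) \<le> (2^k * dl) powr (- ?d - s)"
      using k assms by (intro powr_mono2') auto
    ultimately have "indicator (- cube dl x) y * ennreal (l1norm (x - y) powr (- ?d - s)) \<le> g k y"
      using False by (simp add: g_def r_def[symmetric] ennreal_leI)
    also have "\<dots> \<le> (\<Sum>n. g n y)"
      using sum_le_suminf[OF summableI, of "{k}" "\<lambda>n. g n y"] by simp
    finally show ?thesis .
  qed
  have "(\<integral>\<^sup>+y. indicator (- cube dl x) y * ennreal (l1norm (x - y) powr (- ?d - s)) \<partial>lborel)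
        \<le> (\<integral>\<^sup>+y. (\<Sum>n. g n y) \<partial>lborel)"
    by (rule nn_integral_mono) (use pw in auto)
  also have "\<dots> = (\<Sum>n. \<integral>\<^sup>+y. g n y \<partial>lborel)"
    by (rule nn_integral_suminf) (auto simp: g_def closed_cube intro!: borel_measurable_indicator borel_closed)
  also have "\<dots> = (\<Sum>n. ennreal (4^CARD('n) * dl powr (-s) * (2 powr (-s))^n))"
  proof (rule suminf_cong)
    fix n
    have "(\<integral>\<^sup>+y. g n y \<partial>lborel) = ennreal ((2^n * dl) powr (- ?d - s)) * emeasure lborel (cube (2^(n+1) * dl) x)"
      unfolding g_def by (subst mult.commute, rule nn_integral_cmult_indicator) (simp add: closed_cube borel_closed)
    also have "\<dots> = ennreal ((2^n * dl) powr (- ?d - s) * (2 * (2^(n+1) * dl)) ^ CARD('n))"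
      using assms by (subst emeasure_cube) (auto simp: ennreal_mult)
    also have "\<dots> = ennreal (4^CARD('n) * dl powr (-s) * (2 powr (-s))^n)"
      by (simp only: inner_term[OF assms(1), where 'n='n])
    finally show "(\<integral>\<^sup>+y. g n y \<partial>lborel) = ennreal (4^CARD('n) * dl powr (-s) * (2 powr (-s))^n)" .
  qed
  also have "\<dots> = ennreal (4^CARD('n) * dl powr (-s) * (1 / (1 - 2 powr (-s))))"
  proof (rule suminf_ennreal_eq)
    show "0 \<le> 4^CARD('n) * dl powr (-s) * (2 powr (-s))^n" for n by simp
    have "2 powr (-s) < 1" using assms(2) by (simp add: powr_less_one)
    then have "(\<lambda>n. (2 powr (-s))^n) sums (1 / (1 - 2 powr (-s)))"
      by (intro geometric_sums) simp
    then show "(\<lambda>n. 4^CARD('n) * dl powr (-s) * (2 powr (-s))^n) sums (4^CARD('n) * dl powr (-s) * (1 / (1 - 2 powr (-s))))"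
      by (rule sums_mult)
  qed
  also have "\<dots> = ennreal (4^CARD('n) / (1 - 2 powr (-s)) * dl powr (-s))" by simp
  finally show ?thesis .
qed



definition linf :: "real^'n \<Rightarrow> real" where
  "linf x = Max (range (\<lambda>k. \<bar>x$k\<bar>))"

lemma linf_ge: "\<bar>x$k\<bar> \<le> linf x"
  unfolding linf_def by (rule Max_ge) auto

lemma linf_attained: "\<exists>k. linf x = \<bar>x$k\<bar>"
proof -
  have "linf x \<in> range (\<lambda>k. \<bar>x$k\<bar>)" unfolding linf_def by (rule Max_in) auto
  then show ?thesis by auto
qed

lemma ocube0_linf: "x \<in> ocube a 0 \<longleftrightarrow> linf x < a"
  using linf_attained[of x] linf_ge[of x] by (auto simp: ocube_def) (metis le_less_trans)

lemma cube0_linf: "x \<in> cube a 0 \<longleftrightarrow> linf x \<le> a"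
  using linf_attained[of x] linf_ge[of x] by (auto simp: cube_def) (metis order_trans)

lemma shell_measure:
  fixes a t :: real
  assumes "0 < a" "0 \<le> t" "t \<le> 1"
  shows "emeasure lborel (cube a (0::real^'n) - ocube (a - a*t) 0) \<le> ennreal ((2*a)^CARD('n) * CARD('n) * t)"
proof -
  let ?d = "CARD('n)"
  have at0: "0 \<le> a*t" using assms by simp
  have sub: "ocube (a - a*t) (0::real^'n) \<subseteq> cube a 0"
  proof (auto simp: ocube_def cube_def)
    fix x :: "real^'n" and k assume "\<forall>k. \<bar>x$k\<bar> < a - a*t"
    then have "\<bar>x$k\<bar> < a - a*t" by blast
    then show "\<bar>x$k\<bar> \<le> a" using at0 by linarith
  qed
  have at: "0 \<le> a - a*t" using assms by (simp add: mult_le_cancel_left1)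
  have "emeasure lborel (cube a (0::real^'n) - ocube (a - a*t) 0) = emeasure lborel (cube a (0::real^'n)) - emeasure lborel (ocube (a - a*t) (0::real^'n))"
    using sub at by (intro emeasure_Diff) (auto simp: emeasure_ocube closed_cube open_ocube borel_closed borel_open)
  also have "\<dots> = ennreal ((2*a)^?d) - ennreal ((2*(a - a*t))^?d)"
    using assms at by (simp add: emeasure_cube emeasure_ocube)
  also have "\<dots> = ennreal ((2*a)^?d - (2*(a - a*t))^?d)"
    using at by (subst ennreal_minus) auto
  also have "\<dots> \<le> ennreal ((2*a)^?d * ?d * t)"
  proof (rule ennreal_leI)
    have "1 + real ?d * (-t) \<le> (1 + (-t))^?d" using assms by (intro Bernoulli_inequality) auto
    then have b: "1 - ?d * t \<le> (1 - t)^?d" by simp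
    have "2*(a - a*t) = (2*a) * (1-t)" by (simp add: algebra_simps)
    then have "(2*(a - a*t))^?d = (2*a)^?d * (1-t)^?d" by (simp only: power_mult_distrib)
    moreover have "(2*a)^?d * (1 - ?d * t) \<le> (2*a)^?d * (1-t)^?d"
      using b assms by (intro mult_left_mono) auto
    moreover have "(2*a)^?d * (1 - ?d * t) = (2*a)^?d - (2*a)^?d * ?d * t" by (simp add: algebra_simps)
    ultimately show "(2*a)^?d - (2*(a - a*t))^?d \<le> (2*a)^?d * ?d * t" by linarith
  qed
  finally show ?thesis .
qed

lemma outer_term:
  fixes a s cG :: real
  assumes "0 < a"
  shows "cG * (a / 2^(k+1)) powr (-s) * ((2*a)^CARD('n) * CARD('n) * (1/2^k))
       = (cG * 2^CARD('n) * 2 powr s * CARD('n) * a powr (real CARD('n) - s)) * (2 powr (s - 1))^k"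
proof -
  have p: "(2::real)^(k+1) = 2 powr (real k + 1)" using powr_realpow[of 2 "k+1"] by (simp add: add.commute)
  have q: "((2::real) powr (real k + 1)) powr s = 2 powr s * (2 powr s)^k"
  proof -
    have "((2::real) powr (real k + 1)) powr s = 2 powr (s + real k * s)" by (simp add: powr_powr algebra_simps)
    also have "\<dots> = 2 powr s * 2 powr (real k * s)" by (rule powr_add)
    also have "2 powr (real k * s) = (2 powr s)^k" by (simp add: powr_power)
    finally show ?thesis by simp
  qed
  have 1: "(a / 2^(k+1)) powr (-s) = a powr (-s) * 2 powr s * (2 powr s)^k"
  proof -
    have "(a / 2^(k+1)) powr (-s) = a powr (-s) / (2 powr (real k + 1)) powr (-s)"
      unfolding p by (rule powr_divide)
    also have "\<dots> = a powr (-s) * (2 powr (real k + 1)) powr s"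
      by (simp add: powr_minus_divide)
    finally show ?thesis unfolding q by simp
  qed
  have 2: "(2*a)^CARD('n) = 2^CARD('n) * a powr (real CARD('n))"
    using assms by (simp add: power_mult_distrib powr_realpow)
  have 3: "(2 powr s)^k * (1/2^k) = (2 powr (s - 1))^k"
    by (simp add: powr_diff power_divide)
  have 4: "a powr (-s) * a powr (real CARD('n)) = a powr (real CARD('n) - s)"
    by (simp add: powr_add[symmetric])
  show ?thesis unfolding 1 2 3[symmetric] 4[symmetric] by (simp add: ac_simps)
qed



lemma outer_bound:
  fixes a s cG :: real
  assumes "0 < a" "0 < s" "s < 1" "0 \<le> cG"
  shows "(\<integral>\<^sup>+x. indicator (ocube a (0::real^'n)) x * ennreal (cG * (a - linf x) powr (-s)) \<partial>lborel)
    \<le> ennreal (cG * 2^CARD('n) * 2 powr s * CARD('n) * a powr (real CARD('n) - s) / (1 - 2 powr (s - 1)))"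
proof -
  let ?d = "CARD('n)"
  define c3 where "c3 = cG * 2^CARD('n) * 2 powr s * CARD('n) * a powr (real CARD('n) - s)"
  define sh where "sh k = cube a (0::real^'n) - ocube (a - a*(1/2^k)) 0" for k :: nat
  define g where "g k x = indicator (sh k) x * ennreal (cG * (a/2^(k+1)) powr (-s))" for k x
  have shm: "sh k \<in> sets lborel" for k
    unfolding sh_def by (intro sets.Diff) (auto simp: closed_cube open_ocube borel_closed borel_open)
  have shb[measurable]: "sh k \<in> sets borel" for k using shm[of k] by simp
  have pw: "indicator (ocube a (0::real^'n)) x * ennreal (cG * (a - linf x) powr (-s)) \<le> (\<Sum>k. g k x)" for x
  proof (cases "x \<in> ocube a 0")
    case False then show ?thesis by simp
  next
    case True
    define dl where "dl = a - linf x"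
    have "0 \<le> linf x" using linf_ge[of x] by (meson abs_ge_zero order_trans)
    then have dl: "0 < dl" "dl \<le> a" using True by (auto simp: dl_def ocube0_linf)
    obtain k where k: "a / 2^(k+1) < dl" "dl \<le> a / 2^k" using dyadic_down[OF dl] by blast
    have "dl powr (-s) \<le> (a / 2^(k+1)) powr (-s)"
      using k assms by (intro powr_mono2') auto
    then have le: "cG * dl powr (-s) \<le> cG * (a / 2^(k+1)) powr (-s)"
      using assms(4) by (rule mult_left_mono)
    have "x \<in> sh k"
    proof -
      have "x \<in> cube a 0" using True ocube_sub_cube by blast
      moreover have "\<not> linf x < a - a*(1/2^k)" using k by (simp add: dl_def)
      ultimately show ?thesis unfolding sh_def by (simp add: ocube0_linf)
    qed
    then have "indicator (ocube a (0::real^'n)) x * ennreal (cG * (a - linf x) powr (-s)) \<le> g k x"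
      using True le by (simp add: g_def dl_def[symmetric] ennreal_leI)
    also have "\<dots> \<le> (\<Sum>k. g k x)"
      using sum_le_suminf[OF summableI, of "{k}" "\<lambda>k. g k x"] by simp
    finally show ?thesis .
  qed
  have "(\<integral>\<^sup>+x. indicator (ocube a (0::real^'n)) x * ennreal (cG * (a - linf x) powr (-s)) \<partial>lborel)
        \<le> (\<integral>\<^sup>+x. (\<Sum>k. g k x) \<partial>lborel)"
    by (rule nn_integral_mono) (use pw in auto)
  also have "\<dots> = (\<Sum>k. \<integral>\<^sup>+x. g k x \<partial>lborel)"
    by (rule nn_integral_suminf) (unfold g_def, measurable)
  also have "\<dots> \<le> (\<Sum>k. ennreal (c3 * (2 powr (s - 1))^k))"
  proof (rule suminf_le)
    fix k
    have "(\<integral>\<^sup>+x. g k x \<partial>lborel) = ennreal (cG * (a/2^(k+1)) powr (-s)) * emeasure lborel (sh k)"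
      unfolding g_def by (subst mult.commute, rule nn_integral_cmult_indicator) (rule shm)
    also have "\<dots> \<le> ennreal (cG * (a/2^(k+1)) powr (-s)) * ennreal ((2*a)^?d * ?d * (1/2^k))"
      unfolding sh_def using assms(1) by (intro mult_left_mono shell_measure) auto
    also have "\<dots> = ennreal (cG * (a/2^(k+1)) powr (-s) * ((2*a)^?d * ?d * (1/2^k)))"
      using assms by (intro ennreal_mult[symmetric]) auto
    also have "\<dots> = ennreal (c3 * (2 powr (s - 1))^k)"
      unfolding c3_def by (simp only: outer_term[OF assms(1), where 'n='n])
    finally show "(\<integral>\<^sup>+x. g k x \<partial>lborel) \<le> ennreal (c3 * (2 powr (s - 1))^k)" .
  qed auto
  also have "\<dots> = ennreal (c3 * (1 / (1 - 2 powr (s - 1))))"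
  proof (rule suminf_ennreal_eq)
    show "0 \<le> c3 * (2 powr (s - 1))^k" for k using assms by (simp add: c3_def)
    have "2 powr (s - 1) < 1" using assms(3) by (simp add: powr_less_one)
    then have "(\<lambda>n. (2 powr (s - 1))^n) sums (1 / (1 - 2 powr (s - 1)))"
      by (intro geometric_sums) simp
    then show "(\<lambda>n. c3 * (2 powr (s - 1))^n) sums (c3 * (1 / (1 - 2 powr (s - 1))))"
      by (rule sums_mult)
  qed
  also have "\<dots> = ennreal (cG * 2^CARD('n) * 2 powr s * CARD('n) * a powr (real CARD('n) - s) / (1 - 2 powr (s - 1)))"
    by (simp add: c3_def)
  finally show ?thesis .
qed



lemma l1norm_meas[measurable]: "(l1norm :: real^'n \<Rightarrow> real) \<in> borel_measurable borel"
proof -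
  have "l1norm = (\<lambda>x::real^'n. \<Sum>k\<in>UNIV. \<bar>x$k\<bar>)" by (auto simp: l1norm_def fun_eq_iff)
  moreover have "(\<lambda>x::real^'n. \<Sum>k\<in>UNIV. \<bar>x$k\<bar>) \<in> borel_measurable borel" by measurable
  ultimately show ?thesis by simp
qed

lemma inner_region:
  fixes x :: "real^'n"
  assumes "x \<in> ocube a 0" "0 < s"
  shows "(\<integral>\<^sup>+y. indicator (- cube a 0) y * ennreal (l1norm (x - y) powr (- real CARD('n) - s)) \<partial>lborel)
         \<le> ennreal (4^CARD('n) / (1 - 2 powr (-s)) * (a - linf x) powr (-s))"
proof -
  have dl: "0 < a - linf x" using assms(1) by (simp add: ocube0_linf)
  have sub: "- cube a 0 \<subseteq> - cube (a - linf x) x"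
  proof (rule subsetI)
    fix y :: "real^'n" assume "y \<in> - cube a 0"
    then have "\<not> (\<forall>k. \<bar>y$k\<bar> \<le> a)" by (simp add: cube_def)
    then obtain k where k: "\<bar>y$k\<bar> > a" by (auto simp: not_le)
    have "\<bar>y$k - x$k\<bar> > a - linf x" using k linf_ge[of x k] by linarith
    then show "y \<in> - cube (a - linf x) x" by (auto simp: cube_def not_le)
  qed
  have "(\<integral>\<^sup>+y. indicator (- cube a 0) y * ennreal (l1norm (x - y) powr (- real CARD('n) - s)) \<partial>lborel)
    \<le> (\<integral>\<^sup>+y. indicator (- cube (a - linf x) x) y * ennreal (l1norm (x - y) powr (- real CARD('n) - s)) \<partial>lborel)"
    using sub by (intro nn_integral_mono mult_right_mono) (auto simp: indicator_def)
  also have "\<dots> \<le> ennreal (4^CARD('n) / (1 - 2 powr (-s)) * (a - linf x) powr (-s))"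
    by (rule inner_bound[OF dl assms(2)])
  finally show ?thesis .
qed

lemma phi_meas[measurable]: "(\<lambda>p::(real^'n)\<times>(real^'n). l1norm (fst p - snd p)) \<in> borel_measurable borel"
proof -
  have m0: "(\<lambda>p::(real^'n)\<times>(real^'n). fst p - snd p) \<in> borel_measurable borel"
    by (intro borel_measurable_continuous_onI continuous_intros)
  show ?thesis using measurable_compose[OF m0 l1norm_meas] by (simp add: comp_def)
qed

definition C2 :: "real \<Rightarrow> nat \<Rightarrow> real" where
  "C2 s d = 4^d / (1 - 2 powr (-s)) * 2^d * 2 powr s * d / (1 - 2 powr (s - 1))"

lemma bd_null: "0 < a \<Longrightarrow> cube a (0::real^'n) - ocube a 0 \<in> null_sets lborel"
  using shell_measure[of a 0, where 'n='n]
  by (intro null_setsI) (auto simp: closed_cube open_ocube borel_closed borel_open intro!: sets.Diff)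

lemma AE_not_bd: "0 < a \<Longrightarrow> AE x in lborel. x \<notin> cube a (0::real^'n) - ocube a 0"
  by (rule AE_I'[OF bd_null]) auto

lemma prod_set_borel: "A \<in> sets borel \<Longrightarrow> B \<in> sets borel \<Longrightarrow> A \<times> B \<in> sets (borel :: ('a::second_countable_topology \<times> 'b::second_countable_topology) measure)"
  unfolding borel_prod[symmetric] by (rule pair_measureI)

lemma outer_C2:
  assumes "0 < a" "0 < s" "s < 1"
  shows "(\<integral>\<^sup>+x. indicator (ocube a (0::real^'n)) x * ennreal (4^CARD('n) / (1 - 2 powr (-s)) * (a - linf x) powr (-s)) \<partial>lborel)
    \<le> ennreal (C2 s CARD('n) * a powr (real CARD('n) - s))"
proof -
  have "2 powr (-s) < 1" using assms(2) by (simp add: powr_less_one)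
  then have cg: "0 \<le> 4^CARD('n) / (1 - 2 powr (-s))" by simp
  show ?thesis using outer_bound[OF assms cg, where 'n='n] by (simp add: C2_def)
qed

lemma region_bound1:
  fixes a s :: real
  assumes "0 < a" "0 < s" "s < 1"
  shows "(\<integral>\<^sup>+p. indicator (cube a (0::real^'n) \<times> - cube a 0) p * ennreal (l1norm (fst p - snd p) powr (- real CARD('n) - s)) \<partial>lborel)
    \<le> ennreal (C2 s CARD('n) * a powr (real CARD('n) - s))"
proof -
  let ?c = "- real CARD('n) - s"
  let ?cG = "4^CARD('n) / (1 - 2 powr (-s))"
  define f where "f p = indicator (cube a (0::real^'n) \<times> - cube a 0) p * ennreal (l1norm (fst p - snd p) powr ?c)" for p
  have [measurable]: "cube a (0::real^'n) \<times> - cube a 0 \<in> sets borel"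
    by (intro prod_set_borel) (auto simp: closed_cube borel_closed borel_open open_Compl)
  have fm: "f \<in> borel_measurable (lborel \<Otimes>\<^sub>M lborel)"
    unfolding lborel_prod f_def by simp measurable
  have "(\<integral>\<^sup>+p. f p \<partial>lborel) = (\<integral>\<^sup>+x. \<integral>\<^sup>+y. f (x, y) \<partial>lborel \<partial>lborel)"
    using lborel.nn_integral_fst[OF fm] by (simp add: lborel_prod)
  also have "\<dots> \<le> (\<integral>\<^sup>+x. indicator (ocube a (0::real^'n)) x * ennreal (?cG * (a - linf x) powr (-s)) \<partial>lborel)"
  proof (rule nn_integral_mono_AE)
    show "AE x in lborel. (\<integral>\<^sup>+y. f (x, y) \<partial>lborel) \<le> indicator (ocube a (0::real^'n)) x * ennreal (?cG * (a - linf x) powr (-s))"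
      using AE_not_bd[OF assms(1)]
    proof (rule AE_mp, intro AE_I2 impI)
      fix x :: "real^'n" assume nb: "x \<notin> cube a 0 - ocube a 0"
      show "(\<integral>\<^sup>+y. f (x, y) \<partial>lborel) \<le> indicator (ocube a (0::real^'n)) x * ennreal (?cG * (a - linf x) powr (-s))"
      proof (cases "x \<in> cube a 0")
        case False
        then have "(\<integral>\<^sup>+y. f (x, y) \<partial>lborel) = 0" by (simp add: f_def indicator_def)
        then show ?thesis by simp
      next
        case True
        then have xo: "x \<in> ocube a 0" using nb by blast
        have "(\<integral>\<^sup>+y. f (x, y) \<partial>lborel) = (\<integral>\<^sup>+y. indicator (- cube a 0) y * ennreal (l1norm (x - y) powr ?c) \<partial>lborel)"
          using True by (intro nn_integral_cong) (simp add: f_def indicator_def)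
        also have "\<dots> \<le> ennreal (?cG * (a - linf x) powr (-s))"
          by (rule inner_region[OF xo assms(2)])
        finally show ?thesis using xo by simp
      qed
    qed
  qed
  also have "\<dots> \<le> ennreal (C2 s CARD('n) * a powr (real CARD('n) - s))"
    by (rule outer_C2[OF assms])
  finally show ?thesis unfolding f_def .
qed

lemma region_bound2:
  fixes a s :: real
  assumes "0 < a" "0 < s" "s < 1"
  shows "(\<integral>\<^sup>+p. indicator ((- cube a (0::real^'n)) \<times> cube a 0) p * ennreal (l1norm (fst p - snd p) powr (- real CARD('n) - s)) \<partial>lborel)
    \<le> ennreal (C2 s CARD('n) * a powr (real CARD('n) - s))"
proof -
  let ?c = "- real CARD('n) - s"
  let ?cG = "4^CARD('n) / (1 - 2 powr (-s))"
  define f where "f p = indicator ((- cube a (0::real^'n)) \<times> cube a 0) p * ennreal (l1norm (fst p - snd p) powr ?c)" for p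
  have [measurable]: "(- cube a (0::real^'n)) \<times> cube a 0 \<in> sets borel"
    by (intro prod_set_borel) (auto simp: closed_cube borel_closed borel_open open_Compl)
  have fm: "f \<in> borel_measurable (lborel \<Otimes>\<^sub>M lborel)"
    unfolding lborel_prod f_def by simp measurable
  have "(\<integral>\<^sup>+p. f p \<partial>lborel) = (\<integral>\<^sup>+y. \<integral>\<^sup>+x. f (x, y) \<partial>lborel \<partial>lborel)"
    using lborel_pair.nn_integral_snd[OF fm] by (simp add: lborel_prod)
  also have "\<dots> \<le> (\<integral>\<^sup>+y. indicator (ocube a (0::real^'n)) y * ennreal (?cG * (a - linf y) powr (-s)) \<partial>lborel)"
  proof (rule nn_integral_mono_AE)
    show "AE y in lborel. (\<integral>\<^sup>+x. f (x, y) \<partial>lborel) \<le> indicator (ocube a (0::real^'n)) y * ennreal (?cG * (a - linf y) powr (-s))"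
      using AE_not_bd[OF assms(1)]
    proof (rule AE_mp, intro AE_I2 impI)
      fix y :: "real^'n" assume nb: "y \<notin> cube a 0 - ocube a 0"
      show "(\<integral>\<^sup>+x. f (x, y) \<partial>lborel) \<le> indicator (ocube a (0::real^'n)) y * ennreal (?cG * (a - linf y) powr (-s))"
      proof (cases "y \<in> cube a 0")
        case False
        then have "(\<integral>\<^sup>+x. f (x, y) \<partial>lborel) = 0" by (simp add: f_def indicator_def)
        then show ?thesis by simp
      next
        case True
        then have yo: "y \<in> ocube a 0" using nb by blast
        have "(\<integral>\<^sup>+x. f (x, y) \<partial>lborel) = (\<integral>\<^sup>+x. indicator (- cube a 0) x * ennreal (l1norm (y - x) powr ?c) \<partial>lborel)"
          using True by (intro nn_integral_cong) (simp add: f_def indicator_def l1norm_commute[of x y for x])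
        also have "\<dots> \<le> ennreal (?cG * (a - linf y) powr (-s))"
          by (rule inner_region[OF yo assms(2)])
        finally show ?thesis using yo by simp
      qed
    qed
  qed
  also have "\<dots> \<le> ennreal (C2 s CARD('n) * a powr (real CARD('n) - s))"
    by (rule outer_C2[OF assms])
  finally show ?thesis unfolding f_def .
qed



definition latbox :: "int \<Rightarrow> (int^'n) set" where
  "latbox m = {i. \<forall>k. \<bar>i$k\<bar> \<le> m}"

lemma finite_latbox: "finite (latbox m :: (int^'n) set)"
proof -
  have "latbox m \<subseteq> (\<lambda>f. vec_lambda f) ` (PiE (UNIV::'n set) (\<lambda>_. {-m..m}))"
  proof
    fix i :: "int^'n" assume "i \<in> latbox m"
    then have "\<bar>i$k\<bar> \<le> m" for k by (simp add: latbox_def)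
    then have "-m \<le> i$k \<and> i$k \<le> m" for k by (metis abs_le_D1 abs_le_D2 minus_le_iff)
    then have "i$k \<in> {-m..m}" for k by simp
    then have "vec_nth i \<in> PiE UNIV (\<lambda>_. {-m..m})" by (auto simp: PiE_iff)
    then show "i \<in> (\<lambda>f. vec_lambda f) ` (PiE (UNIV::'n set) (\<lambda>_. {-m..m}))"
      by (intro image_eqI[where x="vec_nth i"]) auto
  qed
  moreover have "finite (PiE (UNIV::'n set) (\<lambda>_. {-m..m}))" by (intro finite_PiE) auto
  ultimately show ?thesis by (meson finite_imageI finite_subset)
qed

lemma in_some_latbox: "\<exists>n::nat. i \<in> latbox (int n)"
proof -
  have "\<bar>i$k\<bar> \<le> (\<Sum>k\<in>UNIV. \<bar>i$k\<bar>)" for k by (rule member_le_sum) auto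
  then show ?thesis
    by (intro exI[where x="nat (\<Sum>k\<in>UNIV. \<bar>i$k\<bar>)"]) (auto simp: latbox_def intro: order_trans)
qed

lemma latbox_mono: "m \<le> n \<Longrightarrow> latbox m \<subseteq> latbox n"
  by (auto simp: latbox_def intro: order_trans)

lemma tri1: "\<bar>y - t\<bar> < (h::real) \<Longrightarrow> c + 2*h \<le> \<bar>t\<bar> \<Longrightarrow> c + h < \<bar>y\<bar>"
  by arith

lemma tri2: "\<bar>y - t\<bar> \<le> (h::real) \<Longrightarrow> \<bar>t\<bar> \<le> c \<Longrightarrow> \<bar>y\<bar> \<le> c + h"
  by arith

lemma in_box:
  assumes "0 < e" "i \<in> latbox m"
  shows "cube (e/2) (site e i) \<subseteq> cube (e * (of_int m + 1/2)) (0::real^'n)"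
proof
  fix x :: "real^'n" assume x: "x \<in> cube (e/2) (site e i)"
  show "x \<in> cube (e * (of_int m + 1/2)) 0"
  proof (unfold cube_def, safe)
    fix k
    have 1: "\<bar>x$k - e * of_int (i$k)\<bar> \<le> e/2" using x by (auto simp: cube_def site_def)
    have "\<bar>i$k\<bar> \<le> m" using assms(2) by (auto simp: latbox_def)
    then have "real_of_int \<bar>i$k\<bar> \<le> of_int m" by (simp only: of_int_le_iff)
    then have "e * \<bar>of_int (i$k)\<bar> \<le> e * of_int m" using assms(1) by (intro mult_left_mono) auto
    then have 2: "\<bar>e * of_int (i$k)\<bar> \<le> e * of_int m" using assms(1) by (simp add: abs_mult)
    show "\<bar>x $ k - (0::real^'n) $ k\<bar> \<le> e * (of_int m + 1/2)"
      using tri2[OF 1 2] by (simp add: algebra_simps)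
  qed
qed

lemma out_box:
  assumes "0 < e" "j \<notin> latbox m"
  shows "ocube (e/2) (site e j) \<subseteq> - cube (e * (of_int m + 1/2)) (0::real^'n)"
proof
  fix y :: "real^'n" assume y: "y \<in> ocube (e/2) (site e j)"
  obtain k where k: "\<bar>j$k\<bar> > m" using assms(2) by (auto simp: latbox_def not_le)
  then have "\<bar>j$k\<bar> \<ge> m + 1" by simp
  then have "real_of_int \<bar>j$k\<bar> \<ge> of_int m + 1" by linarith
  then have "e * \<bar>of_int (j$k)\<bar> \<ge> e * (of_int m + 1)" using assms(1) by (intro mult_left_mono) auto
  then have 2: "\<bar>e * of_int (j$k)\<bar> \<ge> e * of_int m + e" using assms(1) by (simp add: abs_mult algebra_simps)
  have 1: "\<bar>y$k - e * of_int (j$k)\<bar> < e/2" using y by (auto simp: ocube_def site_def)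
  have "\<bar>y$k\<bar> > e * (of_int m + 1/2)" using tri1[OF 1, of "e * of_int m"] 2 by (simp add: algebra_simps)
  then show "y \<in> - cube (e * (of_int m + 1/2)) 0" by (auto simp: cube_def not_le intro!: exI[where x=k])
qed

lemma Gamma_prop:
  assumes "0 < e" "x \<in> ocube R (0::real^'n)" "x \<in> cube (e/2) (site e i)"
  shows "i \<in> latbox (\<lceil>(R + e/2)/e\<rceil> - 1)"
proof -
  have "\<bar>i$k\<bar> \<le> \<lceil>(R + e/2)/e\<rceil> - 1" for k
  proof -
    have 1: "\<bar>x$k\<bar> < R" using assms(2) by (auto simp: ocube_def)
    have 2: "\<bar>x$k - e * of_int (i$k)\<bar> \<le> e/2" using assms(3) by (auto simp: cube_def site_def)
    have "\<bar>e * of_int (i$k)\<bar> < R + e/2" using 1 2 by arith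
    then have "e * \<bar>of_int (i$k)\<bar> < R + e/2" by (simp add: abs_mult abs_of_pos[OF assms(1)])
    then have "\<bar>of_int (i$k)\<bar> < (R + e/2)/e" using assms(1) by (simp add: field_simps)
    then have "of_int \<bar>i$k\<bar> < (R + e/2)/e" by simp
    then have "\<bar>i$k\<bar> < \<lceil>(R + e/2)/e\<rceil>" by (meson ceiling_le_iff le_less_trans linorder_not_le of_int_less_iff order_le_less le_of_int_ceiling)
    then show ?thesis by simp
  qed
  then show ?thesis by (auto simp: latbox_def)
qed

lemma closed_C: "closed (cube r x \<times> cube r' y)"
  by (intro closed_Times closed_cube)

lemma closed_sets_lebesgue: "closed S \<Longrightarrow> (S :: 'a::euclidean_space set) \<in> sets lebesgue"
  by (intro sets_completionI_sets) (simp add: borel_closed)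

lemma LK_Jeps:
  assumes "0 < e" "i \<noteq> j"
  shows "LK K (cube (e/2) (site e i)) (cube (e/2) (site e j)) = ennreal (e powr (real CARD('n) - s)) * Jeps K s e (i::int^'n) j"
proof -
  have "ennreal (e powr (real CARD('n) - s)) * ennreal (e powr (- real CARD('n) + s)) = 1"
    using assms(1) by (simp add: ennreal_mult[symmetric] powr_add[symmetric])
  then show ?thesis using assms(2) unfolding Jeps_def by (simp add: mult.assoc[symmetric])
qed



lemma per_term:
  fixes K :: "real^'n \<Rightarrow> real^'n \<Rightarrow> ennreal" and u :: "int^'n \<Rightarrow> real"
    and A B \<Omega> :: "(real^'n) set" and \<Gamma> :: "(int^'n) set"
  assumes Km: "(\<lambda>p. K (fst p) (snd p)) \<in> borel_measurable lebesgue"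
    and e: "0 < e" and sp: "spin_config u"
    and AE: "A \<subseteq> Eset u e" and BE: "B \<inter> Eset u e = {}"
    and Gam: "\<And>x i. x \<in> \<Omega> \<Longrightarrow> x \<in> cube (e/2) (site e i) \<Longrightarrow> i \<in> \<Gamma>"
    and AB: "A \<subseteq> \<Omega> \<or> B \<subseteq> \<Omega>"
  shows "LK K A B \<le> ennreal (e powr (real CARD('n) - s)) * Hloc K s e \<Gamma> u"
proof -
  define Cq where "Cq q = cube (e/2) (site e (fst q)) \<times> cube (e/2) (site e (snd q))" for q :: "(int^'n) \<times> (int^'n)"
  define S where "S n = {q \<in> latbox (int n) \<times> latbox (int n). (fst q \<in> \<Gamma> \<or> snd q \<in> \<Gamma>) \<and> u (fst q) = 1 \<and> u (snd q) = -1}" for n :: nat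
  define G where "G n p = (\<Sum>q\<in>S n. K (fst p) (snd p) * indicator (Cq q) p)" for n p
  have finS: "finite (S n)" for n
    by (rule finite_subset[of _ "latbox (int n) \<times> latbox (int n)"]) (auto simp: S_def finite_latbox)
  have Smono: "m \<le> n \<Longrightarrow> S m \<subseteq> S n" for m n
    using latbox_mono[of "int m" "int n"] by (auto simp: S_def)
  have Cqm[measurable]: "Cq q \<in> sets lebesgue" for q
    unfolding Cq_def by (intro closed_sets_lebesgue closed_C)
  have [measurable]: "(\<lambda>p. K (fst p) (snd p)) \<in> borel_measurable lebesgue" by (rule Km)
  have Gm: "G n \<in> borel_measurable lebesgue" for n
    unfolding G_def by measurable
  have Ginc: "incseq G"
    by (auto simp: incseq_def le_fun_def G_def intro!: sum_mono2 finS Smono)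
  have nbAE: "AE p in lebesgue. snd (p::(real^'n)\<times>(real^'n)) \<notin> NB e"
    using AE_not_in[OF NB_snd_null[of e, where 'n='n]] by simp
  have pw: "AE p in lebesgue. K (fst p) (snd p) * indicator (A \<times> B) p \<le> (SUP n. G n p)"
    using nbAE
  proof (rule AE_mp, intro AE_I2 impI)
    fix p :: "(real^'n) \<times> (real^'n)"
    assume nb: "snd p \<notin> NB e"
    show "K (fst p) (snd p) * indicator (A \<times> B) p \<le> (SUP n. G n p)"
    proof (cases "p \<in> A \<times> B")
      case False then show ?thesis by simp
    next
      case True
      obtain x y where p: "p = (x, y)" by (cases p)
      have xA: "x \<in> A" and yB: "y \<in> B" using True p by auto
      obtain i where i: "u i = 1" "x \<in> ocube (e/2) (site e i)"
        using xA AE unfolding Eset_def by blast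
      have ynb: "y \<notin> NB e" using nb p by simp
      obtain j where j: "y \<in> ocube (e/2) (site e j)" using cell_exists[OF e ynb] by blast
      have "u j \<noteq> 1"
      proof
        assume "u j = 1"
        then have "y \<in> Eset u e" using j unfolding Eset_def by blast
        then show False using yB BE by blast
      qed
      then have uj: "u j = -1" using sp unfolding spin_config_def by blast
      have ijG: "i \<in> \<Gamma> \<or> j \<in> \<Gamma>"
        using AB xA yB i(2) j Gam ocube_sub_cube by blast
      obtain n1 n2 where n1: "i \<in> latbox (int n1)" and n2: "j \<in> latbox (int n2)"
        using in_some_latbox by metis
      define n where "n = max n1 n2"
      have "i \<in> latbox (int n)" "j \<in> latbox (int n)"
        using n1 n2 latbox_mono[of "int n1" "int n"] latbox_mono[of "int n2" "int n"] by (auto simp: n_def)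
      then have ijS: "(i, j) \<in> S n" using i(1) uj ijG by (simp add: S_def)
      have pC: "p \<in> Cq (i, j)" using i(2) j ocube_sub_cube p by (auto simp: Cq_def)
      have "K (fst p) (snd p) * indicator (A \<times> B) p = K (fst p) (snd p) * indicator (Cq (i,j)) p"
        using True pC by simp
      also have "\<dots> \<le> G n p" unfolding G_def
        by (rule member_le_sum[OF ijS _ finS]) simp
      also have "\<dots> \<le> (SUP n. G n p)" by (rule SUP_upper) simp
      finally show ?thesis .
    qed
  qed
  have "LK K A B = (\<integral>\<^sup>+p. K (fst p) (snd p) * indicator (A \<times> B) p \<partial>lebesgue)" by (simp add: LK_def)
  also have "\<dots> \<le> (\<integral>\<^sup>+p. (SUP n. G n p) \<partial>lebesgue)" by (rule nn_integral_mono_AE[OF pw])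
  also have "\<dots> = (SUP n. integral\<^sup>N lebesgue (G n))" by (rule nn_integral_monotone_convergence_SUP[OF Ginc Gm])
  also have "\<dots> \<le> ennreal (e powr (real CARD('n) - s)) * Hloc K s e \<Gamma> u"
  proof (rule SUP_least)
    fix n :: nat
    let ?J = "\<lambda>q. Jeps K s e (fst q) (snd q)"
    let ?c = "ennreal (e powr (real CARD('n) - s))"
    have "integral\<^sup>N lebesgue (G n) = (\<Sum>q\<in>S n. \<integral>\<^sup>+p. K (fst p) (snd p) * indicator (Cq q) p \<partial>lebesgue)"
      unfolding G_def by (rule nn_integral_sum) measurable
    also have "\<dots> = (\<Sum>q\<in>S n. ?c * ?J q)"
    proof (rule sum.cong)
      fix q assume q: "q \<in> S n"
      then have "fst q \<noteq> snd q" by (auto simp: S_def)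
      then show "(\<integral>\<^sup>+p. K (fst p) (snd p) * indicator (Cq q) p \<partial>lebesgue) = ?c * ?J q"
        using LK_Jeps[OF e, of "fst q" "snd q" K s] by (simp add: LK_def Cq_def)
    qed simp
    also have "\<dots> = ?c * (\<Sum>q\<in>S n. ?J q)" by (simp add: sum_distrib_left)
    also have "\<dots> \<le> ?c * Hloc K s e \<Gamma> u"
    proof (rule mult_left_mono)
      let ?T = "{p. fst p \<in> \<Gamma> \<or> snd p \<in> \<Gamma>}"
      let ?f = "\<lambda>p. Jeps K s e (fst p) (snd p) * ennreal (1 - u (fst p) * u (snd p))"
      have "(\<Sum>q\<in>S n. ?J q) = infsum ?J (S n)" using finS by simp
      also have "\<dots> \<le> infsum ?f ?T"
      proof (rule infsum_mono_neutral)
        fix q assume "q \<in> S n \<inter> ?T"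
        then have "u (fst q) * u (snd q) = -1" by (auto simp: S_def)
        then have "?f q = ?J q * 2" by simp
        then show "?J q \<le> ?f q" by (simp add: mult_2_right)
      next
        fix q assume "q \<in> S n - ?T"
        then show "?J q \<le> 0" by (auto simp: S_def)
      qed (auto intro: nonneg_summable_on_complete)
      also have "\<dots> = Hloc K s e \<Gamma> u" by (simp add: Hloc_def)
      finally show "(\<Sum>q\<in>S n. ?J q) \<le> Hloc K s e \<Gamma> u" .
    qed simp
    finally show "integral\<^sup>N lebesgue (G n) \<le> ?c * Hloc K s e \<Gamma> u" .
  qed
  finally show ?thesis .
qed



lemma t1: "0 \<le> (L::real) \<Longrightarrow> 0 \<le> c \<Longrightarrow> 2 * (e1::ennreal) * (ennreal L * (2 * ennreal c)) = e1 * ennreal (4 * L * c)"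
proof -
  assume "0 \<le> L" "0 \<le> c"
  then have "ennreal (4 * L * c) = 4 * (ennreal L * ennreal c)" by (simp add: ennreal_mult mult.assoc)
  moreover have "2 * (e1::ennreal) * (ennreal L * (2 * ennreal c)) = e1 * ((2 * 2) * (ennreal L * ennreal c))"
    by (simp only: mult_ac)
  moreover have "(2::ennreal) * 2 = 4" by simp
  ultimately show ?thesis by simp
qed

lemma t2: "(f::ennreal) = a \<or> g = a \<Longrightarrow> a \<le> f + g"
  by (metis add.commute le_iff_add)

lemma t3: "(x::real) \<ge> -1 \<Longrightarrow> ennreal (1 - x) \<le> 2"
proof -
  assume "x \<ge> -1"
  then have "ennreal (1 - x) \<le> ennreal 2" by (intro ennreal_leI) linarith
  then show ?thesis by simp
qed

lemma hv_bound:
  fixes K :: "real^'n \<Rightarrow> real^'n \<Rightarrow> ennreal" and v :: "int^'n \<Rightarrow> real" and m :: int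
  assumes Km: "(\<lambda>p. K (fst p) (snd p)) \<in> borel_measurable lebesgue"
    and e: "0 < e" and sp: "spin_config v" and v1: "\<And>i. i \<in> latbox m \<Longrightarrow> v i = 1"
    and m: "0 \<le> m" and K2: "K2 s lam Lam K" and Lam: "0 \<le> Lam" and s: "0 < s" "s < 1"
  shows "ennreal (e powr (real CARD('n) - s)) * Hloc K s e (latbox m) v
    \<le> ennreal (4 * Lam * C2 s CARD('n) * (e * (of_int m + 1/2)) powr (real CARD('n) - s))"
proof -
  define a where "a = e * (of_int m + 1/2)"
  have a: "0 < a" using e m by (simp add: a_def)
  let ?\<Gamma> = "latbox m :: (int^'n) set"
  let ?J = "\<lambda>q. Jeps K s e (fst q) (snd q)"
  let ?T = "{p. fst p \<in> ?\<Gamma> \<or> snd p \<in> ?\<Gamma>}"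
  define B where "B = {q :: (int^'n)\<times>(int^'n). (fst q \<in> ?\<Gamma>) \<noteq> (snd q \<in> ?\<Gamma>)}"
  define Cq where "Cq q = cube (e/2) (site e (fst q)) \<times> cube (e/2) (site e (snd q))" for q :: "(int^'n) \<times> (int^'n)"
  let ?c = "- real CARD('n) - s"
  define f1 where "f1 p = indicator (cube a (0::real^'n) \<times> - cube a 0) p * ennreal (l1norm (fst p - snd p) powr ?c)" for p
  define f2 where "f2 p = indicator ((- cube a (0::real^'n)) \<times> cube a 0) p * ennreal (l1norm (fst p - snd p) powr ?c)" for p
  let ?e1 = "ennreal (e powr (- real CARD('n) + s))"
  let ?X = "ennreal (4 * Lam * C2 s CARD('n) * a powr (real CARD('n) - s))"
  have C2pos: "0 \<le> C2 s CARD('n)"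
  proof -
    have "2 powr (-s) < 1" "2 powr (s - 1) < 1" using s by (simp_all add: powr_less_one)
    then show ?thesis by (simp add: C2_def)
  qed
  have step1: "Hloc K s e ?\<Gamma> v \<le> infsum (\<lambda>q. 2 * ?J q) B"
    unfolding Hloc_def
  proof (rule infsum_mono_neutral)
    fix q assume q: "q \<in> ?T \<inter> B"
    have "v (fst q) = 1 \<or> v (fst q) = -1" "v (snd q) = 1 \<or> v (snd q) = -1" using sp unfolding spin_config_def by blast+
    then have "v (fst q) * v (snd q) \<ge> -1" by auto
    then have "ennreal (1 - v (fst q) * v (snd q)) \<le> 2" by (rule t3)
    then have "?J q * ennreal (1 - v (fst q) * v (snd q)) \<le> ?J q * 2" by (rule mult_left_mono) simp
    then show "?J q * ennreal (1 - v (fst q) * v (snd q)) \<le> 2 * ?J q" by (simp add: mult.commute)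
  next
    fix q assume q: "q \<in> ?T - B"
    then have "v (fst q) = 1" "v (snd q) = 1" using v1 by (auto simp: B_def)
    then show "?J q * ennreal (1 - v (fst q) * v (snd q)) \<le> 0" by simp
  next
    fix q assume "q \<in> B - ?T" then show "0 \<le> 2 * ?J q" by simp
  qed (auto intro: nonneg_summable_on_complete)
  have [measurable]: "cube a (0::real^'n) \<times> - cube a 0 \<in> sets borel"
    by (intro prod_set_borel) (auto simp: closed_cube borel_closed borel_open open_Compl)
  have [measurable]: "(- cube a (0::real^'n)) \<times> cube a 0 \<in> sets borel"
    by (intro prod_set_borel) (auto simp: closed_cube borel_closed borel_open open_Compl)
  have f1m: "f1 \<in> borel_measurable lborel" unfolding f1_def by simp measurable
  have f2m: "f2 \<in> borel_measurable lborel" unfolding f2_def by simp measurable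
  have Cqm[measurable]: "Cq q \<in> sets lebesgue" for q
    unfolding Cq_def by (intro closed_sets_lebesgue closed_C)
  have [measurable]: "(\<lambda>p. K (fst p) (snd p)) \<in> borel_measurable lebesgue" by (rule Km)
  have intbound: "(\<integral>\<^sup>+p. (\<Sum>q\<in>F. K (fst p) (snd p) * indicator (Cq q) p) \<partial>lebesgue) \<le> ennreal Lam * (2 * ennreal (C2 s CARD('n) * a powr (real CARD('n) - s)))"
    if F: "finite F" "F \<subseteq> B" for F
  proof -
    have nb1: "AE p in lebesgue. fst (p::(real^'n)\<times>(real^'n)) \<notin> NB e"
      using AE_not_in[OF NB_fst_null[of e, where 'n='n]] by simp
    have nb2: "AE p in lebesgue. snd (p::(real^'n)\<times>(real^'n)) \<notin> NB e"
      using AE_not_in[OF NB_snd_null[of e, where 'n='n]] by simp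
    have kb: "AE p in lebesgue. K (fst p) (snd p) \<le> ennreal (Lam * l1norm (fst p - snd p) powr ?c)"
      using K2 unfolding K2_def by (elim eventually_mono) auto
    have pw: "AE p in lebesgue. (\<Sum>q\<in>F. K (fst p) (snd p) * indicator (Cq q) p) \<le> ennreal Lam * (f1 p + f2 p)"
      using nb1 nb2 kb
    proof (eventually_elim)
      case (elim p)
      obtain x y where p: "p = (x, y)" by (cases p)
      show ?case
      proof (cases "\<exists>q\<in>F. p \<in> Cq q")
        case False
        then have "(\<Sum>q\<in>F. K (fst p) (snd p) * indicator (Cq q) p) = 0" by (intro sum.neutral) auto
        then show ?thesis by simp
      next
        case True
        then obtain q0 where q0: "q0 \<in> F" "p \<in> Cq q0" by blast
        have x0: "x \<in> ocube (e/2) (site e (fst q0))" using q0(2) elim(1) p cube_notNB_ocube[OF e] by (auto simp: Cq_def)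
        have y0: "y \<in> ocube (e/2) (site e (snd q0))" using q0(2) elim(2) p cube_notNB_ocube[OF e] by (auto simp: Cq_def)
        have uniq: "q = q0" if "q \<in> F" "p \<in> Cq q" for q
        proof -
          have "fst q0 = fst q" using ocube_cube_unique[OF e x0] that p by (auto simp: Cq_def)
          moreover have "snd q0 = snd q" using ocube_cube_unique[OF e y0] that p by (auto simp: Cq_def)
          ultimately show ?thesis by (simp add: prod_eq_iff)
        qed
        have "(\<Sum>q\<in>F. K (fst p) (snd p) * indicator (Cq q) p) = K (fst p) (snd p) * indicator (Cq q0) p + (\<Sum>q\<in>F - {q0}. K (fst p) (snd p) * indicator (Cq q) p)"
          using F(1) q0(1) by (rule sum.remove)
        also have "(\<Sum>q\<in>F - {q0}. K (fst p) (snd p) * indicator (Cq q) p) = 0"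
          using uniq by (intro sum.neutral) (auto simp: indicator_def)
        finally have sumK: "(\<Sum>q\<in>F. K (fst p) (snd p) * indicator (Cq q) p) = K (fst p) (snd p)"
          using q0(2) by simp
        have Kle: "K (fst p) (snd p) \<le> ennreal Lam * ennreal (l1norm (fst p - snd p) powr ?c)"
          using elim(3) Lam by (simp add: ennreal_mult)
        have "q0 \<in> B" using q0(1) F(2) by blast
        then have "f1 p = ennreal (l1norm (fst p - snd p) powr ?c) \<or> f2 p = ennreal (l1norm (fst p - snd p) powr ?c)"
        proof (cases "fst q0 \<in> ?\<Gamma>")
          case True
          then have "snd q0 \<notin> ?\<Gamma>" using \<open>q0 \<in> B\<close> by (auto simp: B_def)
          then have "y \<in> - cube a 0" using out_box[OF e] y0 by (auto simp: a_def)
          moreover have "x \<in> cube a 0" using in_box[OF e True] q0(2) p by (auto simp: a_def Cq_def)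
          ultimately show ?thesis using p by (simp add: f1_def)
        next
          case False
          then have "snd q0 \<in> ?\<Gamma>" using \<open>q0 \<in> B\<close> by (auto simp: B_def)
          then have "y \<in> cube a 0" using in_box[OF e] q0(2) p by (auto simp: a_def Cq_def)
          moreover have "x \<in> - cube a 0" using out_box[OF e False] x0 by (auto simp: a_def)
          ultimately show ?thesis using p by (simp add: f2_def)
        qed
        then have "ennreal (l1norm (fst p - snd p) powr ?c) \<le> f1 p + f2 p"
          by (rule t2)
        then have "ennreal Lam * ennreal (l1norm (fst p - snd p) powr ?c) \<le> ennreal Lam * (f1 p + f2 p)"
          by (rule mult_left_mono) simp
        then show ?thesis using sumK Kle by simp
      qed
    qed
    have "(\<integral>\<^sup>+p. (\<Sum>q\<in>F. K (fst p) (snd p) * indicator (Cq q) p) \<partial>lebesgue) \<le> (\<integral>\<^sup>+p. ennreal Lam * (f1 p + f2 p) \<partial>lebesgue)"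
      by (rule nn_integral_mono_AE[OF pw])
    also have "\<dots> = (\<integral>\<^sup>+p. ennreal Lam * (f1 p + f2 p) \<partial>lborel)"
      by (rule nn_integral_completion)
    also have "\<dots> = ennreal Lam * ((\<integral>\<^sup>+p. f1 p \<partial>lborel) + (\<integral>\<^sup>+p. f2 p \<partial>lborel))"
      using f1m f2m by (simp add: nn_integral_cmult nn_integral_add)
    also have "\<dots> \<le> ennreal Lam * (ennreal (C2 s CARD('n) * a powr (real CARD('n) - s)) + ennreal (C2 s CARD('n) * a powr (real CARD('n) - s)))"
      using region_bound1[OF a s, where 'n='n] region_bound2[OF a s, where 'n='n]
      by (intro mult_left_mono add_mono) (auto simp: f1_def f2_def)
    also have "\<dots> = ennreal Lam * (2 * ennreal (C2 s CARD('n) * a powr (real CARD('n) - s)))"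
      by (simp add: mult_2)
    finally show ?thesis .
  qed
  have step2: "infsum (\<lambda>q. 2 * ?J q) B \<le> ?e1 * ?X"
  proof (rule infsum_le_finite_sums)
    show "(\<lambda>q. 2 * ?J q) summable_on B" by (auto intro: nonneg_summable_on_complete)
  next
    fix F assume F: "finite F" "F \<subseteq> B"
    have "(\<Sum>q\<in>F. 2 * ?J q) = (\<Sum>q\<in>F. 2 * (?e1 * LK K (cube (e/2) (site e (fst q))) (cube (e/2) (site e (snd q)))))"
    proof (rule sum.cong)
      fix q assume "q \<in> F"
      then have "fst q \<noteq> snd q" using F(2) by (auto simp: B_def)
      then show "2 * ?J q = 2 * (?e1 * LK K (cube (e/2) (site e (fst q))) (cube (e/2) (site e (snd q))))"
        by (simp add: Jeps_def)
    qed simp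
    also have "\<dots> = 2 * ?e1 * (\<Sum>q\<in>F. \<integral>\<^sup>+p. K (fst p) (snd p) * indicator (Cq q) p \<partial>lebesgue)"
      by (simp add: sum_distrib_left LK_def Cq_def mult.assoc)
    also have "(\<Sum>q\<in>F. \<integral>\<^sup>+p. K (fst p) (snd p) * indicator (Cq q) p \<partial>lebesgue) = (\<integral>\<^sup>+p. (\<Sum>q\<in>F. K (fst p) (snd p) * indicator (Cq q) p) \<partial>lebesgue)"
      by (rule nn_integral_sum[symmetric]) measurable
    also have "2 * ?e1 * \<dots> \<le> 2 * ?e1 * (ennreal Lam * (2 * ennreal (C2 s CARD('n) * a powr (real CARD('n) - s))))"
      by (intro mult_left_mono intbound[OF F]) simp
    also have "\<dots> = ?e1 * ?X"
    proof -
      have "0 \<le> C2 s CARD('n) * a powr (real CARD('n) - s)" using C2pos by simp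
      from t1[OF Lam this, of ?e1] show ?thesis by (simp only: mult.assoc)
    qed
    finally show "(\<Sum>q\<in>F. 2 * ?J q) \<le> ?e1 * ?X" .
  qed
  have "ennreal (e powr (real CARD('n) - s)) * Hloc K s e ?\<Gamma> v \<le> ennreal (e powr (real CARD('n) - s)) * (?e1 * ?X)"
    using step1 step2 by (intro mult_left_mono) auto
  also have "\<dots> = ?X"
  proof -
    have "ennreal (e powr (real CARD('n) - s)) * ?e1 = 1"
      using e by (simp add: ennreal_mult[symmetric] powr_add[symmetric])
    then show ?thesis by (simp add: mult.assoc[symmetric])
  qed
  finally show ?thesis by (simp add: a_def)
qed



theorem mainTheorem19:
  fixes s lam Lam :: real
  assumes "CARD('n::finite) \<ge> 2"
    and "0 < s" and "s < 1" and "0 < lam" and "lam \<le> Lam"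
  shows "\<exists>C\<ge>1. \<forall>K :: real^'n \<Rightarrow> real^'n \<Rightarrow> ennreal.
     (\<lambda>p. K (fst p) (snd p)) \<in> borel_measurable lebesgue \<longrightarrow> K1 K \<longrightarrow> K2 s lam Lam K \<longrightarrow>
     (\<forall>\<epsilon>. 0 < \<epsilon> \<longrightarrow> \<epsilon> < 1 \<longrightarrow> (\<forall>u. ground_state K s \<epsilon> u \<longrightarrow>
        (\<forall>R\<ge>1. PerK K (Eset u \<epsilon>) (ocube R 0) \<le> ennreal (C * R powr (real CARD('n) - s)))))"
proof -
  let ?d = "CARD('n)"
  have Lam: "0 \<le> Lam" using assms by simp
  have C2pos: "0 \<le> C2 s ?d"
  proof -
    have "2 powr (-s) < 1" "2 powr (s - 1) < 1" using assms by (simp_all add: powr_less_one)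
    then show ?thesis by (simp add: C2_def)
  qed
  define C where "C = max 1 (12 * Lam * C2 s ?d * 2^?d)"
  have C1: "C \<ge> 1" by (simp add: C_def)
  have main: "PerK K (Eset u e) (ocube R 0) \<le> ennreal (C * R powr (real ?d - s))"
    if Km: "(\<lambda>p. K (fst p) (snd p)) \<in> borel_measurable lebesgue" and K2: "K2 s lam Lam K"
      and e: "0 < e" "e < 1" and gs: "ground_state K s e u" and R: "R \<ge> 1"
    for K :: "real^'n \<Rightarrow> real^'n \<Rightarrow> ennreal" and e u R
  proof -
    define m where "m = \<lceil>(R + e/2)/e\<rceil> - 1"
    define \<Gamma> where "\<Gamma> = (latbox m :: (int^'n) set)"
    define a where "a = e * (of_int m + 1/2)"
    define \<Omega> where "\<Omega> = (ocube R 0 :: (real^'n) set)"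
    define E where "E = Eset u e"
    have cpos: "0 < (R + e/2)/e" using e R by simp
    have m0: "0 \<le> m" using cpos by (simp add: m_def)
    have mlt: "of_int m < (R + e/2)/e" unfolding m_def using ceiling_correct[of "(R + e/2)/e"] by simp
    then have "e * of_int m < R + e/2" using e by (simp add: field_simps)
    then have a2R: "a \<le> 2 * R" using e R by (simp add: a_def algebra_simps)
    have a0: "0 < a" using e m0 by (simp add: a_def)
    have sp: "spin_config u" using gs by (simp add: ground_state_def)
    define v where "v i = (if i \<in> \<Gamma> then 1 else u i)" for i
    have spv: "spin_config v" using sp by (auto simp: spin_config_def v_def)
    have Huv: "Hloc K s e \<Gamma> u \<le> Hloc K s e \<Gamma> v"
      using gs spv unfolding ground_state_def by (auto simp: \<Gamma>_def finite_latbox v_def)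
    have Hv: "ennreal (e powr (real ?d - s)) * Hloc K s e \<Gamma> v \<le> ennreal (4 * Lam * C2 s ?d * a powr (real ?d - s))"
      unfolding \<Gamma>_def a_def
      by (rule hv_bound[OF Km e(1) spv _ m0 K2 Lam assms(2,3)]) (simp add: v_def \<Gamma>_def)
    have Hu: "ennreal (e powr (real ?d - s)) * Hloc K s e \<Gamma> u \<le> ennreal (4 * Lam * C2 s ?d * a powr (real ?d - s))"
      using Huv Hv by (meson dual_order.trans mult_left_mono zero_le)
    have Gam: "\<And>x i. x \<in> \<Omega> \<Longrightarrow> x \<in> cube (e/2) (site e i) \<Longrightarrow> i \<in> \<Gamma>"
      unfolding \<Omega>_def \<Gamma>_def m_def using Gamma_prop[OF e(1)] by blast
    let ?X = "ennreal (4 * Lam * C2 s ?d * a powr (real ?d - s))"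
    have P1: "LK K (E \<inter> \<Omega>) (\<Omega> - E) \<le> ?X"
    proof -
      have "LK K (E \<inter> \<Omega>) (\<Omega> - E) \<le> ennreal (e powr (real ?d - s)) * Hloc K s e \<Gamma> u"
        by (rule per_term[OF Km e(1) sp, where \<Omega>=\<Omega>]) (use Gam in \<open>auto simp: E_def\<close>)
      then show ?thesis using Hu by (rule order_trans)
    qed
    have P2: "LK K (E \<inter> \<Omega>) (UNIV - (E \<union> \<Omega>)) \<le> ?X"
    proof -
      have "LK K (E \<inter> \<Omega>) (UNIV - (E \<union> \<Omega>)) \<le> ennreal (e powr (real ?d - s)) * Hloc K s e \<Gamma> u"
        by (rule per_term[OF Km e(1) sp, where \<Omega>=\<Omega>]) (use Gam in \<open>auto simp: E_def\<close>)
      then show ?thesis using Hu by (rule order_trans)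
    qed
    have P3: "LK K (E - \<Omega>) (\<Omega> - E) \<le> ?X"
    proof -
      have "LK K (E - \<Omega>) (\<Omega> - E) \<le> ennreal (e powr (real ?d - s)) * Hloc K s e \<Gamma> u"
        by (rule per_term[OF Km e(1) sp, where \<Omega>=\<Omega>]) (use Gam in \<open>auto simp: E_def\<close>)
      then show ?thesis using Hu by (rule order_trans)
    qed
    have "PerK K E \<Omega> \<le> ?X + ?X + ?X"
      unfolding PerK_def using P1 P2 P3 by (intro add_mono)
    also have "\<dots> = ennreal (3 * (4 * Lam * C2 s ?d * a powr (real ?d - s)))"
      using Lam C2pos by (simp add: ennreal_plus[symmetric] del: ennreal_plus)
    also have "\<dots> \<le> ennreal (C * R powr (real ?d - s))"
    proof (rule ennreal_leI)
      have dsp: "0 \<le> real ?d - s" using assms by simp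
      have "a powr (real ?d - s) \<le> (2 * R) powr (real ?d - s)"
        using a0 a2R dsp by (intro powr_mono2) auto
      also have "\<dots> = 2 powr (real ?d - s) * R powr (real ?d - s)"
        using R by (simp add: powr_mult)
      also have "\<dots> \<le> 2^?d * R powr (real ?d - s)"
      proof (rule mult_right_mono)
        have "2 powr (real ?d - s) \<le> 2 powr (real ?d)" using assms by (intro powr_mono) auto
        then show "2 powr (real ?d - s) \<le> 2^?d" by (simp add: powr_realpow)
      qed simp
      finally have apow: "a powr (real ?d - s) \<le> 2^?d * R powr (real ?d - s)" .
      have "3 * (4 * Lam * C2 s ?d * a powr (real ?d - s)) = (12 * Lam * C2 s ?d) * a powr (real ?d - s)" by simp
      also have "\<dots> \<le> (12 * Lam * C2 s ?d) * (2^?d * R powr (real ?d - s))"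
        using Lam C2pos apow by (intro mult_left_mono) auto
      also have "\<dots> = (12 * Lam * C2 s ?d * 2^?d) * R powr (real ?d - s)" by simp
      also have "\<dots> \<le> C * R powr (real ?d - s)"
        by (intro mult_right_mono) (auto simp: C_def)
      finally show "3 * (4 * Lam * C2 s ?d * a powr (real ?d - s)) \<le> C * R powr (real ?d - s)" .
    qed
    finally show ?thesis by (simp add: E_def \<Omega>_def)
  qed
  show ?thesis
    by (rule exI[where x=C], intro conjI C1 allI impI main) auto
qed


end
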